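(* Let $(X,\tau)$ be a fuzzifying topological space such that $\tau_P(A\cap B)\ge\min(\tau_P(A),\tau_P(B))$ for all $A,B\subseteq X$. Then $\max\big(0,T_2^P(X,\tau)+\Gamma_P(X,\tau)-1\big)\le T_4^P(X,\tau)$, i.e. $\vDash T_2^P(X,\tau)\otimes\Gamma_P(X,\tau)\to T_4^P(X,\tau)$.
   Context: A fuzzifying topology on $X$ is $\tau:P(X)\to[0,1]$ with $\tau(X)=1$, $\tau(A\cap B)\ge\min(\tau(A),\tau(B))$, $\tau(\bigcup A_\lambda)\ge\inf\tau(A_\lambda)$. $N_x(A)=\sup_{x\in B\subseteq A}\tau(B)$; $Cl(A)(x)=1-N_x(X\setminus A)$; for $\mu:X\to[0,1]$, $Int(\mu)(x)=\sup_{x\in B}\min(\tau(B),\inf_{y\in B}\mu(y))$; pre-open degrees $\tau_P(A)=\inf_{x\in A}Int(Cl(A))(x)$; $N^P_x(A)=\sup_{x\in B\subseteq A}\tau_P(B)$. $T_2^P(X,\tau)=\inf_{x\ne y}\sup\{\min(N^P_x(U),N^P_y(V)):U\cap V=\emptyset\}$. Pre-normality: $T_4^P(X,\tau)=\inf_{A,B\subseteq X,A\cap B=\emptyset}\min\big(1,1-\min(\tau_P(X\setminus A),\tau_P(X\setminus B))+\sup\{\min(\tau_P(U),\tau_P(V)):U\cap V=\emptyset,A\subseteq U,B\subseteq V\}\big)$. Strong compactness: with $K(\Re,X)=\inf_{x\in X}\sup_{B\ni x}\Re(B)$, $[\Re\subseteq\tau_P]=\inf_B\min(1,1-\Re(B)+\tau_P(B))$,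 $\wp\le\Re$ pointwise, $FF(\wp)=1-\inf\{\delta\in[0,1]:\{B:\wp(B)>\delta\}\text{ finite}\}$, $\Gamma_P(X,\tau)=\inf_{\Re}\min\big(1,1-\max(0,K(\Re,X)+[\Re\subseteq\tau_P]-1)+\sup_{\wp\le\Re}\max(0,K(\wp,X)+FF(\wp)-1)\big)$, inf/sup over fuzzy families $\Re,\wp:P(X)\to[0,1]$. *)

theory Defs
  imports Main "HOL.Real"
begin

text \<open>The carrier X of the fuzzifying topology is the universe of the type 'a.
  Degrees are reals in [0,1]; sup/inf are taken in [0,1], so the empty sup is 0
  and the empty inf is 1.\<close>

definition sup01 :: "real set \<Rightarrow> real" where
  "sup01 S = (if S = {} then 0 else Sup S)"

definition inf01 :: "real set \<Rightarrow> real" where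
  "inf01 S = (if S = {} then 1 else Inf S)"

definition fuzzifying_topology :: "('a set \<Rightarrow> real) \<Rightarrow> bool" where
  "fuzzifying_topology \<tau> \<longleftrightarrow>
     (\<forall>A. 0 \<le> \<tau> A \<and> \<tau> A \<le> 1) \<and>
     \<tau> UNIV = 1 \<and>
     (\<forall>A B. \<tau> (A \<inter> B) \<ge> min (\<tau> A) (\<tau> B)) \<and>
     (\<forall>\<A>. \<tau> (\<Union>\<A>) \<ge> inf01 (\<tau> ` \<A>))"

definition nbhd :: "('a set \<Rightarrow> real) \<Rightarrow> 'a \<Rightarrow> 'a set \<Rightarrow> real" where
  "nbhd \<tau> x A = sup01 {\<tau> B | B. x \<in> B \<and> B \<subseteq> A}"

definition fcl :: "('a set \<Rightarrow> real) \<Rightarrow> 'a set \<Rightarrow> 'a \<Rightarrow> real" where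
  "fcl \<tau> A x = 1 - nbhd \<tau> x (- A)"

definition fint :: "('a set \<Rightarrow> real) \<Rightarrow> ('a \<Rightarrow> real) \<Rightarrow> 'a \<Rightarrow> real" where
  "fint \<tau> \<mu> x = sup01 {min (\<tau> B) (inf01 (\<mu> ` B)) | B. x \<in> B}"

definition preopen :: "('a set \<Rightarrow> real) \<Rightarrow> 'a set \<Rightarrow> real" where
  "preopen \<tau> A = inf01 ((\<lambda>x. fint \<tau> (fcl \<tau> A) x) ` A)"

definition pre_nbhd :: "('a set \<Rightarrow> real) \<Rightarrow> 'a \<Rightarrow> 'a set \<Rightarrow> real" where
  "pre_nbhd \<tau> x A = sup01 {preopen \<tau> B | B. x \<in> B \<and> B \<subseteq> A}"

definition T2P :: "('a set \<Rightarrow> real) \<Rightarrow> real" where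
  "T2P \<tau> = inf01 {sup01 {min (pre_nbhd \<tau> x U) (pre_nbhd \<tau> y V) | U V. U \<inter> V = {}}
                    | x y. x \<noteq> y}"

definition T4P :: "('a set \<Rightarrow> real) \<Rightarrow> real" where
  "T4P \<tau> = inf01 {min 1 (1 - min (preopen \<tau> (- A)) (preopen \<tau> (- B))
                   + sup01 {min (preopen \<tau> U) (preopen \<tau> V) | U V.
                             U \<inter> V = {} \<and> A \<subseteq> U \<and> B \<subseteq> V})
                 | A B. A \<inter> B = {}}"

definition fuzzy_family :: "('a set \<Rightarrow> real) \<Rightarrow> bool" where
  "fuzzy_family R \<longleftrightarrow> (\<forall>B. 0 \<le> R B \<and> R B \<le> 1)"

definition Kdeg :: "('a set \<Rightarrow> real) \<Rightarrow> real" where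
  "Kdeg R = inf01 ((\<lambda>x. sup01 {R B | B. x \<in> B}) ` UNIV)"

definition subdeg_P :: "('a set \<Rightarrow> real) \<Rightarrow> ('a set \<Rightarrow> real) \<Rightarrow> real" where
  "subdeg_P \<tau> R = inf01 {min 1 (1 - R B + preopen \<tau> B) | B. True}"

definition FF :: "('a set \<Rightarrow> real) \<Rightarrow> real" where
  "FF p = 1 - inf01 {\<delta>. 0 \<le> \<delta> \<and> \<delta> \<le> 1 \<and> finite {B. p B > \<delta>}}"

definition GammaP :: "('a set \<Rightarrow> real) \<Rightarrow> real" where
  "GammaP \<tau> = inf01 {min 1 (1 - max 0 (Kdeg R + subdeg_P \<tau> R - 1)
                    + sup01 {max 0 (Kdeg p + FF p - 1) | p. fuzzy_family p \<and> (\<forall>B. p B \<le> R B)})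
                  | R. fuzzy_family R}"

end

theory Submission
  imports Defs
begin

lemma sup01_ub: "s \<in> S \<Longrightarrow> \<forall>x\<in>S. x \<le> b \<Longrightarrow> s \<le> sup01 S"
  unfolding sup01_def by (auto intro!: cSup_upper bdd_aboveI)

lemma sup01_least: "\<forall>x\<in>S. x \<le> b \<Longrightarrow> 0 \<le> b \<Longrightarrow> sup01 S \<le> b"
  unfolding sup01_def by (auto intro!: cSup_least)

lemma sup01_nonneg: "\<forall>x\<in>S. 0 \<le> x \<Longrightarrow> \<forall>x\<in>S. x \<le> b \<Longrightarrow> 0 \<le> sup01 S"
proof (cases "S = {}")
  case True then show ?thesis by (simp add: sup01_def)
next
  case False
  assume a: "\<forall>x\<in>S. 0 \<le> x" "\<forall>x\<in>S. x \<le> b"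
  from False obtain s where "s \<in> S" by auto
  then show ?thesis using a sup01_ub[of s S b] by force
qed

lemma sup01_gtD: "c < sup01 S \<Longrightarrow> 0 \<le> c \<Longrightarrow> \<forall>x\<in>S. x \<le> b \<Longrightarrow> \<exists>x\<in>S. c < x"
proof -
  assume a: "c < sup01 S" "0 \<le> c" "\<forall>x\<in>S. x \<le> b"
  then have ne: "S \<noteq> {}" by (auto simp: sup01_def)
  have bd: "bdd_above S" using a(3) by (auto intro!: bdd_aboveI)
  from a(1) ne have "c < Sup S" by (simp add: sup01_def)
  then show ?thesis using less_cSup_iff[OF ne bd] by auto
qed

lemma inf01_lb: "s \<in> S \<Longrightarrow> \<forall>x\<in>S. b \<le> x \<Longrightarrow> inf01 S \<le> s"
  unfolding inf01_def by (auto intro!: cInf_lower bdd_belowI)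

lemma inf01_greatest: "\<forall>x\<in>S. c \<le> x \<Longrightarrow> c \<le> 1 \<Longrightarrow> c \<le> inf01 S"
  unfolding inf01_def by (auto intro!: cInf_greatest)

lemma inf01_le1: "\<forall>x\<in>S. x \<le> 1 \<Longrightarrow> \<forall>x\<in>S. b \<le> x \<Longrightarrow> inf01 S \<le> 1"
proof (cases "S = {}")
  case True then show ?thesis by (simp add: inf01_def)
next
  case False
  assume a: "\<forall>x\<in>S. x \<le> 1" "\<forall>x\<in>S. b \<le> x"
  from False obtain s where "s \<in> S" by auto
  then show ?thesis using a inf01_lb[of s S b] by force
qed

lemma inf01_ltD: "inf01 S < c \<Longrightarrow> c \<le> 1 \<Longrightarrow> \<forall>x\<in>S. b \<le> x \<Longrightarrow> \<exists>x\<in>S. x < c"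
proof -
  assume a: "inf01 S < c" "c \<le> 1" "\<forall>x\<in>S. b \<le> x"
  then have ne: "S \<noteq> {}" by (auto simp: inf01_def)
  have bd: "bdd_below S" using a(3) by (auto intro!: bdd_belowI)
  from a(1) ne have "Inf S < c" by (simp add: inf01_def)
  then show ?thesis using cInf_less_iff[OF ne bd] by auto
qed

lemma range01_sup: "\<forall>x\<in>S. 0 \<le> x \<and> x \<le> 1 \<Longrightarrow> 0 \<le> sup01 S \<and> sup01 S \<le> 1"
  using sup01_nonneg[of S 1] sup01_least[of S 1] by auto

lemma range01_inf: "\<forall>x\<in>S. 0 \<le> x \<and> x \<le> 1 \<Longrightarrow> 0 \<le> inf01 S \<and> inf01 S \<le> 1"
  using inf01_greatest[of S 0] inf01_le1[of S 0] by auto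

context
  fixes \<tau> :: "'a set \<Rightarrow> real"
  assumes ft: "fuzzifying_topology \<tau>"
begin

lemma tau_range: "0 \<le> \<tau> A \<and> \<tau> A \<le> 1"
  using ft unfolding fuzzifying_topology_def by auto

lemma nbhd_range: "0 \<le> nbhd \<tau> x A \<and> nbhd \<tau> x A \<le> 1"
  unfolding nbhd_def by (rule range01_sup) (auto simp: tau_range)

lemma fcl_range: "0 \<le> fcl \<tau> A x \<and> fcl \<tau> A x \<le> 1"
  unfolding fcl_def using nbhd_range[of x "-A"] by auto

lemma fint_range:
  assumes "\<forall>y. 0 \<le> \<mu> y \<and> \<mu> y \<le> 1"
  shows "0 \<le> fint \<tau> \<mu> x \<and> fint \<tau> \<mu> x \<le> 1"
proof -
  have "\<forall>B. 0 \<le> inf01 (\<mu> ` B) \<and> inf01 (\<mu> ` B) \<le> 1"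
    using assms by (intro allI range01_inf) auto
  then show ?thesis unfolding fint_def
    by (intro range01_sup) (auto simp: tau_range min_le_iff_disj)
qed

lemma preopen_range: "0 \<le> preopen \<tau> A \<and> preopen \<tau> A \<le> 1"
  unfolding preopen_def
  by (rule range01_inf) (auto intro!: fint_range fcl_range)

lemma pre_nbhd_range: "0 \<le> pre_nbhd \<tau> x A \<and> pre_nbhd \<tau> x A \<le> 1"
  unfolding pre_nbhd_def by (rule range01_sup) (auto simp: preopen_range)

lemma fcl_mono: "A \<subseteq> A' \<Longrightarrow> fcl \<tau> A x \<le> fcl \<tau> A' x"
proof -
  assume s: "A \<subseteq> A'"
  have "nbhd \<tau> x (- A') \<le> nbhd \<tau> x (- A)"
    unfolding nbhd_def
  proof (rule sup01_least)
    show "0 \<le> sup01 {\<tau> B |B. x \<in> B \<and> B \<subseteq> - A}"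
      by (rule sup01_nonneg[where b=1]) (auto simp: tau_range)
    show "\<forall>v\<in>{\<tau> B |B. x \<in> B \<and> B \<subseteq> - A'}. v \<le> sup01 {\<tau> B |B. x \<in> B \<and> B \<subseteq> - A}"
      using s by (auto intro!: sup01_ub[where b=1] simp: tau_range)
  qed
  then show ?thesis unfolding fcl_def by simp
qed

lemma fint_mono:
  assumes "\<forall>y. \<mu> y \<le> \<mu>' y" "\<forall>y. 0 \<le> \<mu> y \<and> \<mu> y \<le> 1" "\<forall>y. 0 \<le> \<mu>' y \<and> \<mu>' y \<le> 1"
  shows "fint \<tau> \<mu> x \<le> fint \<tau> \<mu>' x"
  unfolding fint_def
proof (rule sup01_least)
  show "0 \<le> sup01 {min (\<tau> B) (inf01 (\<mu>' ` B)) |B. x \<in> B}"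
    by (rule sup01_nonneg[where b=1]) (use assms(3) range01_inf[of "\<mu>' ` _"] in \<open>auto simp: tau_range min_le_iff_disj\<close>)
  show "\<forall>v\<in>{min (\<tau> B) (inf01 (\<mu> ` B)) |B. x \<in> B}. v \<le> sup01 {min (\<tau> B) (inf01 (\<mu>' ` B)) |B. x \<in> B}"
  proof safe
    fix B assume "x \<in> B"
    have i: "inf01 (\<mu> ` B) \<le> inf01 (\<mu>' ` B)"
    proof (rule inf01_greatest)
      show "inf01 (\<mu> ` B) \<le> 1" using range01_inf[of "\<mu> ` B"] assms(2) by auto
      show "\<forall>v\<in>\<mu>' ` B. inf01 (\<mu> ` B) \<le> v"
        using assms(1,2) by (auto intro: order_trans[OF inf01_lb[where b=0]])
    qed
    have "min (\<tau> B) (inf01 (\<mu> ` B)) \<le> min (\<tau> B) (inf01 (\<mu>' ` B))" using i by simp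
    also have "\<dots> \<le> sup01 {min (\<tau> B) (inf01 (\<mu>' ` B)) |B. x \<in> B}"
      by (rule sup01_ub[where b=1]) (use \<open>x \<in> B\<close> assms(3) range01_inf[of "\<mu>' ` _"] in \<open>auto simp: tau_range min_le_iff_disj\<close>)
    finally show "min (\<tau> B) (inf01 (\<mu> ` B)) \<le> sup01 {min (\<tau> B) (inf01 (\<mu>' ` B)) |B. x \<in> B}" .
  qed
qed


lemma preopen_le_fint: "x \<in> A \<Longrightarrow> preopen \<tau> A \<le> fint \<tau> (fcl \<tau> A) x"
proof -
  assume x: "x \<in> A"
  have "\<forall>y. 0 \<le> fcl \<tau> A y \<and> fcl \<tau> A y \<le> 1" using fcl_range by auto
  then have "\<forall>y. 0 \<le> fint \<tau> (fcl \<tau> A) y" using fint_range by blast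
  then show ?thesis unfolding preopen_def
    by (intro inf01_lb[where b=0]) (use x in auto)
qed

lemma preopen_Union:
  assumes "\<forall>W\<in>F. c \<le> preopen \<tau> W" "c \<le> 1"
  shows "c \<le> preopen \<tau> (\<Union>F)"
  unfolding preopen_def
proof (rule inf01_greatest[OF _ assms(2)], safe)
  fix x W assume xW: "x \<in> W" "W \<in> F"
  have "c \<le> preopen \<tau> W" using assms xW by auto
  also have "\<dots> \<le> fint \<tau> (fcl \<tau> W) x" by (rule preopen_le_fint[OF xW(1)])
  also have "\<dots> \<le> fint \<tau> (fcl \<tau> (\<Union>F)) x"
    by (rule fint_mono) (use xW in \<open>auto intro!: fcl_mono fcl_range\<close>)
  finally show "c \<le> fint \<tau> (fcl \<tau> (\<Union>F)) x" .
qed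

lemma preopen_UNIV: "c \<le> 1 \<Longrightarrow> c \<le> preopen \<tau> UNIV"
proof -
  assume c: "c \<le> 1"
  have n: "nbhd \<tau> x {} = 0" for x unfolding nbhd_def sup01_def by auto
  have f: "fcl \<tau> UNIV = (\<lambda>_. 1)" unfolding fcl_def by (auto simp: n)
  have i: "inf01 {1::real} = 1" unfolding inf01_def by simp
  have t: "\<tau> UNIV = 1" using ft unfolding fuzzifying_topology_def by auto
  have "1 \<le> fint \<tau> (fcl \<tau> UNIV) x" for x
    unfolding f fint_def
  proof (rule order_trans[OF _ sup01_ub[where b=1, of "min (\<tau> UNIV) (inf01 ((\<lambda>_. 1) ` UNIV))"]])
    show "min (\<tau> UNIV) (inf01 ((\<lambda>_. 1) ` UNIV)) \<in> {min (\<tau> B) (inf01 ((\<lambda>_. 1) ` B)) |B. x \<in> B}"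
      by (rule CollectI, rule exI[of _ UNIV], simp)
  qed (auto simp: i t tau_range min_le_iff_disj)
  then show ?thesis unfolding preopen_def using c
    by (intro inf01_greatest) (auto intro: order_trans)
qed

lemma preopen_Inter:
  assumes int: "\<forall>A B. preopen \<tau> (A \<inter> B) \<ge> min (preopen \<tau> A) (preopen \<tau> B)"
    and fin: "finite F" and "\<forall>W\<in>F. c \<le> preopen \<tau> W" "c \<le> 1"
  shows "c \<le> preopen \<tau> (\<Inter>F)"
  using fin assms(3)
proof (induction F rule: finite_induct)
  case empty then show ?case using preopen_UNIV[OF assms(4)] by simp
next
  case (insert W F)
  then have "c \<le> preopen \<tau> W" "c \<le> preopen \<tau> (\<Inter>F)" by auto
  then show ?case using int[rule_format, of W "\<Inter>F"] by simp
qed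

lemma T2_sep:
  assumes "x \<noteq> y" "0 \<le> t" "t < T2P \<tau>"
  shows "\<exists>U V. x \<in> U \<and> y \<in> V \<and> U \<inter> V = {} \<and> t < preopen \<tau> U \<and> t < preopen \<tau> V"
proof -
  let ?e = "sup01 {min (pre_nbhd \<tau> x U) (pre_nbhd \<tau> y V) | U V. U \<inter> V = {}}"
  have eb: "\<forall>x y. 0 \<le> sup01 {min (pre_nbhd \<tau> x U) (pre_nbhd \<tau> y V) | U V. U \<inter> V = {}}"
    by (intro allI sup01_nonneg[where b=1]) (auto simp: pre_nbhd_range min_le_iff_disj)
  have "T2P \<tau> \<le> ?e" unfolding T2P_def
  proof (rule inf01_lb[where b=0])
    show "?e \<in> {sup01 {min (pre_nbhd \<tau> x U) (pre_nbhd \<tau> y V) | U V. U \<inter> V = {}} | x y. x \<noteq> y}"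
      using assms(1) by blast
    show "\<forall>v\<in>{sup01 {min (pre_nbhd \<tau> x U) (pre_nbhd \<tau> y V) | U V. U \<inter> V = {}} | x y. x \<noteq> y}. 0 \<le> v"
      using eb by blast
  qed
  then have "t < ?e" using assms by simp
  then have "\<exists>v\<in>{min (pre_nbhd \<tau> x U) (pre_nbhd \<tau> y V) | U V. U \<inter> V = {}}. t < v"
  proof (rule sup01_gtD[where b=1, OF _ assms(2)], safe)
    fix U V :: "'a set"
    show "min (pre_nbhd \<tau> x U) (pre_nbhd \<tau> y V) \<le> 1" using pre_nbhd_range[of x U] by (simp add: min_le_iff_disj)
  qed
  then obtain U V where UV0: "U \<inter> V = {}" "t < min (pre_nbhd \<tau> x U) (pre_nbhd \<tau> y V)"
    by blast
  then have UV: "U \<inter> V = {}" "t < pre_nbhd \<tau> x U" "t < pre_nbhd \<tau> y V" by auto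
  have pb: "\<forall>v\<in>{preopen \<tau> B | B. z \<in> B \<and> B \<subseteq> W}. v \<le> 1" for z W
    using preopen_range by blast
  have "\<exists>v\<in>{preopen \<tau> B | B. x \<in> B \<and> B \<subseteq> U}. t < v"
    by (rule sup01_gtD[OF UV(2)[unfolded pre_nbhd_def] assms(2) pb])
  then obtain U' where U': "x \<in> U'" "U' \<subseteq> U" "t < preopen \<tau> U'" by blast
  have "\<exists>v\<in>{preopen \<tau> B | B. y \<in> B \<and> B \<subseteq> V}. t < v"
    by (rule sup01_gtD[OF UV(3)[unfolded pre_nbhd_def] assms(2) pb])
  then obtain V' where V': "y \<in> V'" "V' \<subseteq> V" "t < preopen \<tau> V'" by blast
  show ?thesis using U' V' UV(1) by blast
qed


lemma Kdeg_range: "fuzzy_family p \<Longrightarrow> 0 \<le> Kdeg p \<and> Kdeg p \<le> 1"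
proof -
  assume p: "fuzzy_family p"
  have "\<forall>x. 0 \<le> sup01 {p B | B. x \<in> B} \<and> sup01 {p B | B. x \<in> B} \<le> 1"
    using p unfolding fuzzy_family_def by (intro allI range01_sup) auto
  then show ?thesis unfolding Kdeg_def by (intro range01_inf) auto
qed

lemma FF_range: "0 \<le> FF p \<and> FF p \<le> 1"
proof -
  have "0 \<le> inf01 {\<delta>. 0 \<le> \<delta> \<and> \<delta> \<le> 1 \<and> finite {B. p B > \<delta>}} \<and>
        inf01 {\<delta>. 0 \<le> \<delta> \<and> \<delta> \<le> 1 \<and> finite {B. p B > \<delta>}} \<le> 1"
    by (rule range01_inf) auto
  then show ?thesis unfolding FF_def by auto
qed

lemma subdeg_range: "fuzzy_family R \<Longrightarrow> 0 \<le> subdeg_P \<tau> R \<and> subdeg_P \<tau> R \<le> 1"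
  unfolding subdeg_P_def fuzzy_family_def
  by (rule range01_inf) (auto simp: min_def preopen_range intro: add_nonneg_nonneg)

lemma Gamma_elem_nonneg:
  "0 \<le> min 1 (1 - max 0 (Kdeg R + subdeg_P \<tau> R - 1)
            + sup01 {max 0 (Kdeg p + FF p - 1) | p. fuzzy_family p \<and> (\<forall>B. p B \<le> R B)})"
  if "fuzzy_family R" for R
proof -
  have q: "0 \<le> sup01 {max 0 (Kdeg p + FF p - 1) | p. fuzzy_family p \<and> (\<forall>B. p B \<le> R B)}"
  proof (rule sup01_nonneg[where b=1])
    show "\<forall>x\<in>{max 0 (Kdeg p + FF p - 1) | p. fuzzy_family p \<and> (\<forall>B. p B \<le> R B)}. x \<le> 1"
    proof safe
      fix p assume "fuzzy_family p"
      then have "Kdeg p \<le> 1" "FF p \<le> 1" using Kdeg_range FF_range by auto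
      then show "max 0 (Kdeg p + FF p - 1) \<le> 1" by simp
    qed
  qed auto
  have "Kdeg R \<le> 1" "subdeg_P \<tau> R \<le> 1" using that Kdeg_range subdeg_range by auto
  then show ?thesis using q by simp
qed

lemma Gamma_le1: "GammaP \<tau> \<le> 1"
  unfolding GammaP_def
  by (rule inf01_le1[where b=0]) (auto intro: Gamma_elem_nonneg)

lemma gamma_cover:
  assumes R: "fuzzy_family R" and RP: "\<forall>W. R W \<le> preopen \<tau> W"
    and cov: "\<forall>x. \<exists>W. x \<in> W \<and> k \<le> R W" and c0: "0 \<le> c" and cl: "c < GammaP \<tau> + k - 1"
  shows "\<exists>F. finite F \<and> \<Union>F = UNIV \<and> (\<forall>W\<in>F. c < R W)"
proof -
  have Rb: "0 \<le> R W" "R W \<le> 1" for W using R unfolding fuzzy_family_def by auto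
  have sub: "subdeg_P \<tau> R = 1"
  proof -
    have "{min 1 (1 - R B + preopen \<tau> B) | B. True} = {1}"
      using RP by (auto simp: min_def)
    then show ?thesis unfolding subdeg_P_def inf01_def by simp
  qed
  obtain W0 where "k \<le> R W0" using cov by blast
  then have k1: "k \<le> 1" using Rb(2)[of W0] by linarith
  have Kk: "k \<le> Kdeg R" unfolding Kdeg_def
  proof (rule inf01_greatest[OF _ k1], safe)
    fix x
    obtain W where W: "x \<in> W" "k \<le> R W" using cov by blast
    have "R W \<le> sup01 {R B | B. x \<in> B}" by (rule sup01_ub[where b=1]) (use W Rb in auto)
    then show "k \<le> sup01 {R B | B. x \<in> B}" using W by simp
  qed
  have K01: "0 \<le> Kdeg R" "Kdeg R \<le> 1" using Kdeg_range[OF R] by auto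
  let ?Q = "sup01 {max 0 (Kdeg p + FF p - 1) | p. fuzzy_family p \<and> (\<forall>B. p B \<le> R B)}"
  have "GammaP \<tau> \<le> min 1 (1 - max 0 (Kdeg R + subdeg_P \<tau> R - 1) + ?Q)"
    unfolding GammaP_def
    by (rule inf01_lb[where b=0]) (use R in \<open>auto intro: Gamma_elem_nonneg\<close>)
  then have "GammaP \<tau> \<le> 1 - Kdeg R + ?Q" using sub K01 by simp
  then have "c < ?Q" using cl Kk by simp
  then have "\<exists>v\<in>{max 0 (Kdeg p + FF p - 1) | p. fuzzy_family p \<and> (\<forall>B. p B \<le> R B)}. c < v"
  proof (rule sup01_gtD[where b=1, OF _ c0], safe)
    fix p assume "fuzzy_family p"
    then have "Kdeg p \<le> 1" "FF p \<le> 1" using Kdeg_range FF_range by auto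
    then show "max 0 (Kdeg p + FF p - 1) \<le> 1" by simp
  qed
  then obtain p where p: "fuzzy_family p" "\<forall>B. p B \<le> R B" "c < max 0 (Kdeg p + FF p - 1)"
    by blast
  have Kp: "0 \<le> Kdeg p" "Kdeg p \<le> 1" using Kdeg_range[OF p(1)] by auto
  let ?D = "{\<delta>. 0 \<le> \<delta> \<and> \<delta> \<le> 1 \<and> finite {B. p B > \<delta>}}"
  have "inf01 ?D < Kdeg p - c" using p(3) c0 unfolding FF_def by simp
  then have "\<exists>v\<in>?D. v < Kdeg p - c"
    by (rule inf01_ltD[where b=0]) (use Kp c0 in auto)
  then obtain \<delta> where d: "0 \<le> \<delta>" "finite {B. p B > \<delta>}" "\<delta> < Kdeg p - c"
    by blast
  define F where "F = {B. \<delta> + c < p B}"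
  have "finite F" unfolding F_def using d(2) by (rule rev_finite_subset) (use c0 in auto)
  moreover have "\<Union>F = UNIV"
  proof (rule subset_antisym[OF subset_UNIV], rule subsetI)
    fix x :: 'a
    have pb: "0 \<le> p B" "p B \<le> 1" for B using p(1) unfolding fuzzy_family_def by auto
    have "Kdeg p \<le> sup01 {p B | B. x \<in> B}" unfolding Kdeg_def
      by (rule inf01_lb[where b=0]) (auto intro!: sup01_nonneg[where b=1] simp: pb)
    then have "\<delta> + c < sup01 {p B | B. x \<in> B}" using d by simp
    then have "\<exists>v\<in>{p B | B. x \<in> B}. \<delta> + c < v"
      by (rule sup01_gtD[where b=1]) (use d(1) c0 pb in auto)
    then obtain B where "x \<in> B" "\<delta> + c < p B" by blast
    then show "x \<in> \<Union>F" unfolding F_def by auto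
  qed
  moreover have "\<forall>W\<in>F. c < R W"
  proof
    fix W assume "W \<in> F"
    then have "\<delta> + c < p W" by (simp add: F_def)
    then show "c < R W" using p(2) d(1) by (smt (verit))
  qed
  ultimately show ?thesis by blast
qed

end

theorem lemma3p4:
  fixes \<tau> :: "'a set \<Rightarrow> real"
  assumes "fuzzifying_topology \<tau>"
    and "\<forall>A B. preopen \<tau> (A \<inter> B) \<ge> min (preopen \<tau> A) (preopen \<tau> B)"
  shows "max 0 (T2P \<tau> + GammaP \<tau> - 1) \<le> T4P \<tau>"
proof -
  note ft = assms(1) and int = assms(2)
  define t where "t = T2P \<tau>"
  define g where "g = GammaP \<tau>"
  have Pr: "0 \<le> preopen \<tau> W" "preopen \<tau> W \<le> 1" for W using preopen_range[OF ft] by auto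
  have t01: "0 \<le> t \<and> t \<le> 1" unfolding t_def T2P_def
  proof (rule range01_inf, safe)
    fix x y :: 'a
    have "0 \<le> sup01 {min (pre_nbhd \<tau> x U) (pre_nbhd \<tau> y V) | U V. U \<inter> V = {}} \<and>
          sup01 {min (pre_nbhd \<tau> x U) (pre_nbhd \<tau> y V) | U V. U \<inter> V = {}} \<le> 1"
      by (rule range01_sup) (use pre_nbhd_range[OF ft] in \<open>auto simp: min_le_iff_disj\<close>)
    then show "0 \<le> sup01 {min (pre_nbhd \<tau> x U) (pre_nbhd \<tau> y V) | U V. U \<inter> V = {}}"
      "sup01 {min (pre_nbhd \<tau> x U) (pre_nbhd \<tau> y V) | U V. U \<inter> V = {}} \<le> 1" by auto
  qed
  have t0: "0 \<le> t" and t1: "t \<le> 1" using t01 by auto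
  have g1: "g \<le> 1" unfolding g_def by (rule Gamma_le1[OF ft])
  have main: "g + min t (min (preopen \<tau> (-A)) (preopen \<tau> (-B))) - 1 \<le>
      sup01 {min (preopen \<tau> U) (preopen \<tau> V) | U V. U \<inter> V = {} \<and> A \<subseteq> U \<and> B \<subseteq> V}"
    if AB: "A \<inter> B = {}" for A B
  proof (rule dense_le)
    let ?m = "min (preopen \<tau> (-A)) (preopen \<tau> (-B))"
    let ?S = "{min (preopen \<tau> U) (preopen \<tau> V) | U V. U \<inter> V = {} \<and> A \<subseteq> U \<and> B \<subseteq> V}"
    have Sb: "\<forall>v\<in>?S. v \<le> 1" using Pr by (auto simp: min_le_iff_disj)
    have s0: "0 \<le> sup01 ?S" by (rule sup01_nonneg[OF _ Sb]) (use Pr in auto)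
    fix c assume c: "c < g + min t ?m - 1"
    show "c \<le> sup01 ?S"
    proof (cases "c < 0")
      case True then show ?thesis using s0 by simp
    next
      case False
      then have c0: "0 \<le> c" by simp
      define t' where "t' = c / 2 + 1 / 2 - g / 2 + t / 2"
      have mm: "?m \<le> 1" using Pr by (simp add: min_le_iff_disj)
      have "min t ?m \<le> t" by simp
      then have c1: "c \<le> 1" using c t0 t1 g1 by linarith
      have a1: "c + 1 - g < min t ?m" using c by linarith
      have a2: "min t ?m \<le> t" "min t ?m \<le> ?m" by auto
      have t'0a: "0 \<le> t'" using a1 a2 g1 t0 t1 c0 unfolding t'_def by linarith
      have t'0b: "t' < t" using a1 a2 g1 t0 t1 c0 unfolding t'_def by linarith
      have t'0c: "t' \<le> 1" using a1 a2 g1 t0 t1 c0 unfolding t'_def by linarith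
      note t'0 = t'0a t'0b t'0c
      have a3: "c + 1 - g < t'" using a1 a2 unfolding t'_def by linarith
      have "c + 1 - g < min t' ?m" using a3 a1 a2 by (simp add: min_def)
      then have ck: "c < g + min t' ?m - 1" by linarith
      have step1: "\<exists>U V. x \<in> U \<and> B \<subseteq> V \<and> U \<inter> V = {} \<and> t' \<le> preopen \<tau> U \<and> c \<le> preopen \<tau> V"
        if xA: "x \<in> A" for x
      proof -
        define R1 where "R1 W = (if (\<exists>U. x \<in> U \<and> U \<inter> W = {} \<and> t' < preopen \<tau> U) \<or> W = -B
                                   then preopen \<tau> W else 0)" for W
        have R1f: "fuzzy_family R1" unfolding fuzzy_family_def R1_def using Pr by auto
        have R1P: "\<forall>W. R1 W \<le> preopen \<tau> W" unfolding R1_def using Pr by auto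
        have cov: "\<forall>y. \<exists>W. y \<in> W \<and> min t' ?m \<le> R1 W"
        proof
          fix y
          show "\<exists>W. y \<in> W \<and> min t' ?m \<le> R1 W"
          proof (cases "y \<in> B")
            case True
            then have "x \<noteq> y" using xA AB by auto
            have "t' < T2P \<tau>" using t'0(2) t_def by simp
            then obtain U V where UV: "x \<in> U" "y \<in> V" "U \<inter> V = {}" "t' < preopen \<tau> U" "t' < preopen \<tau> V"
              using T2_sep[OF ft \<open>x \<noteq> y\<close> t'0(1)] by blast
            have "\<exists>U. x \<in> U \<and> U \<inter> V = {} \<and> t' < preopen \<tau> U" using UV by blast
            then have "R1 V = preopen \<tau> V" unfolding R1_def by simp
            then show ?thesis using UV by (intro exI[of _ V]) auto
          next
            case False
            have "R1 (-B) = preopen \<tau> (-B)" unfolding R1_def by auto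
            then show ?thesis using False by (intro exI[of _ "-B"]) auto
          qed
        qed
        obtain F where F: "finite F" "\<Union>F = UNIV" "\<forall>W\<in>F. c < R1 W"
          using gamma_cover[OF ft R1f R1P cov c0 ck[unfolded g_def]] by blast
        define G where "G = {W\<in>F. W \<inter> B \<noteq> {}}"
        have finG: "finite G" unfolding G_def using F(1) by simp
        have Gp: "\<exists>U. x \<in> U \<and> U \<inter> W = {} \<and> t' < preopen \<tau> U" "c < preopen \<tau> W" if "W \<in> G" for W
        proof -
          have W: "W \<in> F" "W \<inter> B \<noteq> {}" using that unfolding G_def by auto
          have "c < R1 W" using F(3) W by auto
          then have "(\<exists>U. x \<in> U \<and> U \<inter> W = {} \<and> t' < preopen \<tau> U) \<or> W = -B" "R1 W = preopen \<tau> W"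
            unfolding R1_def using c0 by (auto split: if_splits)
          moreover have "W \<noteq> -B" using W(2) by auto
          ultimately show "\<exists>U. x \<in> U \<and> U \<inter> W = {} \<and> t' < preopen \<tau> U" "c < preopen \<tau> W"
            using \<open>c < R1 W\<close> by auto
        qed
        have "\<forall>W\<in>G. \<exists>U. x \<in> U \<and> U \<inter> W = {} \<and> t' < preopen \<tau> U" using Gp(1) by blast
        then have "\<exists>Uf. \<forall>W\<in>G. x \<in> Uf W \<and> Uf W \<inter> W = {} \<and> t' < preopen \<tau> (Uf W)" by (rule bchoice)
        then obtain Uf where Uf: "\<forall>W\<in>G. x \<in> Uf W \<and> Uf W \<inter> W = {} \<and> t' < preopen \<tau> (Uf W)" by blast
        have "B \<subseteq> \<Union>G"
        proof
          fix y assume "y \<in> B"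
          moreover have "y \<in> \<Union>F" using F(2) by auto
          ultimately show "y \<in> \<Union>G" unfolding G_def by auto
        qed
        moreover have "x \<in> \<Inter>(Uf ` G)" using Uf by auto
        moreover have "\<Inter>(Uf ` G) \<inter> \<Union>G = {}"
        proof -
          have "z \<notin> \<Inter>(Uf ` G)" if "z \<in> W" "W \<in> G" for z W
          proof -
            have "z \<notin> Uf W" using Uf that by auto
            then show ?thesis using that(2) by auto
          qed
          then show ?thesis by auto
        qed
        moreover have "t' \<le> preopen \<tau> (\<Inter>(Uf ` G))"
          by (rule preopen_Inter[OF ft int]) (use finG Uf t'0 in \<open>auto intro: less_imp_le\<close>)
        moreover have "c \<le> preopen \<tau> (\<Union>G)"
          by (rule preopen_Union[OF ft]) (use Gp(2) c1 in \<open>auto intro: less_imp_le\<close>)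
        ultimately show ?thesis by blast
      qed
      have "\<forall>x\<in>A. \<exists>U V. x \<in> U \<and> B \<subseteq> V \<and> U \<inter> V = {} \<and> t' \<le> preopen \<tau> U \<and> c \<le> preopen \<tau> V"
        using step1 by blast
      then have "\<exists>Uf. \<forall>x\<in>A. \<exists>V. x \<in> Uf x \<and> B \<subseteq> V \<and> Uf x \<inter> V = {} \<and> t' \<le> preopen \<tau> (Uf x) \<and> c \<le> preopen \<tau> V"
        by (rule bchoice)
      then obtain Uf where "\<forall>x\<in>A. \<exists>V. x \<in> Uf x \<and> B \<subseteq> V \<and> Uf x \<inter> V = {} \<and> t' \<le> preopen \<tau> (Uf x) \<and> c \<le> preopen \<tau> V"
        by blast
      then have "\<exists>Vf. \<forall>x\<in>A. x \<in> Uf x \<and> B \<subseteq> Vf x \<and> Uf x \<inter> Vf x = {} \<and> t' \<le> preopen \<tau> (Uf x) \<and> c \<le> preopen \<tau> (Vf x)"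
        by (rule bchoice)
      then obtain Vf where H: "\<forall>x\<in>A. x \<in> Uf x \<and> B \<subseteq> Vf x \<and> Uf x \<inter> Vf x = {} \<and> t' \<le> preopen \<tau> (Uf x) \<and> c \<le> preopen \<tau> (Vf x)"
        by blast
      define R2 where "R2 W = (if (\<exists>x\<in>A. W = Uf x) \<or> W = -A then preopen \<tau> W else 0)" for W
      have R2f: "fuzzy_family R2" unfolding fuzzy_family_def R2_def using Pr by auto
      have R2P: "\<forall>W. R2 W \<le> preopen \<tau> W" unfolding R2_def using Pr by auto
      have cov2: "\<forall>y. \<exists>W. y \<in> W \<and> min t' ?m \<le> R2 W"
      proof
        fix y
        show "\<exists>W. y \<in> W \<and> min t' ?m \<le> R2 W"
        proof (cases "y \<in> A")
          case True
          then have "R2 (Uf y) = preopen \<tau> (Uf y)" unfolding R2_def by auto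
          then show ?thesis using H True by (intro exI[of _ "Uf y"]) auto
        next
          case False
          have "R2 (-A) = preopen \<tau> (-A)" unfolding R2_def by auto
          then show ?thesis using False by (intro exI[of _ "-A"]) auto
        qed
      qed
      obtain F where F: "finite F" "\<Union>F = UNIV" "\<forall>W\<in>F. c < R2 W"
        using gamma_cover[OF ft R2f R2P cov2 c0 ck[unfolded g_def]] by blast
      define G where "G = {W\<in>F. W \<inter> A \<noteq> {}}"
      have finG: "finite G" unfolding G_def using F(1) by simp
      have Gp: "\<exists>x\<in>A. W = Uf x" "c < preopen \<tau> W" if "W \<in> G" for W
      proof -
        have W: "W \<in> F" "W \<inter> A \<noteq> {}" using that unfolding G_def by auto
        have "c < R2 W" using F(3) W by auto
        then have "(\<exists>x\<in>A. W = Uf x) \<or> W = -A" "R2 W = preopen \<tau> W"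
          unfolding R2_def using c0 by (auto split: if_splits)
        moreover have "W \<noteq> -A" using W(2) by auto
        ultimately show "\<exists>x\<in>A. W = Uf x" "c < preopen \<tau> W"
          using \<open>c < R2 W\<close> by auto
      qed
      have "\<forall>W\<in>G. \<exists>x. x \<in> A \<and> W = Uf x" using Gp(1) by blast
      then have "\<exists>xf. \<forall>W\<in>G. xf W \<in> A \<and> W = Uf (xf W)" by (rule bchoice)
      then obtain xf where xf: "\<forall>W\<in>G. xf W \<in> A \<and> W = Uf (xf W)" by blast
      define U where "U = \<Union>G"
      define V where "V = \<Inter>((\<lambda>W. Vf (xf W)) ` G)"
      have "A \<subseteq> U"
      proof
        fix y assume "y \<in> A"
        moreover have "y \<in> \<Union>F" using F(2) by auto
        ultimately show "y \<in> U" unfolding U_def G_def by auto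
      qed
      moreover have "B \<subseteq> V" unfolding V_def
      proof (rule subsetI, rule InterI)
        fix y S assume y: "y \<in> B" and S: "S \<in> (\<lambda>W. Vf (xf W)) ` G"
        then obtain W where "W \<in> G" "S = Vf (xf W)" by blast
        then show "y \<in> S" using xf H y by auto
      qed
      moreover have "U \<inter> V = {}"
      proof (rule ccontr)
        assume "U \<inter> V \<noteq> {}"
        then obtain z W where z: "z \<in> W" "W \<in> G" "z \<in> Vf (xf W)" unfolding U_def V_def by blast
        have "W = Uf (xf W)" "xf W \<in> A" using xf z(2) by auto
        then have "Uf (xf W) \<inter> Vf (xf W) = {}" using H by auto
        then show False using z \<open>W = Uf (xf W)\<close> by auto
      qed
      moreover have "c \<le> preopen \<tau> U" unfolding U_def
        by (rule preopen_Union[OF ft]) (use Gp(2) c1 in \<open>auto intro: less_imp_le\<close>)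
      moreover have "c \<le> preopen \<tau> V" unfolding V_def
        by (rule preopen_Inter[OF ft int]) (use finG xf H c1 in auto)
      ultimately have mem: "min (preopen \<tau> U) (preopen \<tau> V) \<in> ?S" and cm: "c \<le> min (preopen \<tau> U) (preopen \<tau> V)"
        by auto
      show ?thesis using cm sup01_ub[OF mem Sb] by linarith
    qed
  qed
  show ?thesis unfolding T4P_def t_def[symmetric] g_def[symmetric]
  proof (rule inf01_greatest, safe)
    show "max 0 (t + g - 1) \<le> 1" using t01 g1 by simp
    fix A B :: "'a set" assume AB: "A \<inter> B = {}"
    let ?m = "min (preopen \<tau> (-A)) (preopen \<tau> (-B))"
    let ?s = "sup01 {min (preopen \<tau> U) (preopen \<tau> V) | U V. U \<inter> V = {} \<and> A \<subseteq> U \<and> B \<subseteq> V}"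
    have s0: "0 \<le> ?s" by (rule sup01_nonneg[where b=1]) (use Pr in \<open>auto simp: min_le_iff_disj\<close>)
    have m1: "?m \<le> 1" "0 \<le> ?m" using Pr by (auto simp: min_le_iff_disj)
    have ms: "g + min t ?m - 1 \<le> ?s" by (rule main[OF AB])
    have tm: "t + ?m - 1 \<le> min t ?m" using t01 m1 by (auto simp: min_def)
    show "max 0 (t + g - 1) \<le> min 1 (1 - ?m + ?s)"
      using s0 m1 ms tm t01 g1 by (simp add: max_def min_def)
  qed
qed

end
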